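(* Let $C>0$ and let $X_1,\dots,X_n$ be i.i.d. random variables on $[0,1]$ with law $\mu$, $X$ a generic copy. For mappings $g,h:[0,1]\to[-C,C]$ let $$\Delta_n(g-h)=\frac1n\sum_{i=1}^n\left\{(g(X_i)-h(X_i))^2-\mathbb{E}\left[(g(X)-h(X))^2\right]\right\}.$$ Let $g$ be a function from $[0,1]$ to $[-C,C]$ and let $\mathcal{C}^+_{[0,1]}$ be the set of non-decreasing functions from $[0,1]$ to $[-C,C]$. Then there exist positive real numbers $\alpha',\beta',c_1',c_2'$ depending only on $C$ such that, for all $n$, $$\mathbb{P}\left(\sup_{h\in\mathcal{C}^+_{[0,1]}}|\Delta_n(g-h)|>n^{-\alpha'}\right)\le c_1'\exp\left(-c_2'n^{\beta'}\right).$$ *)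

theory Defs
  imports "HOL-Probability.Probability"
begin

text \<open>Empirical deviation: Delta_n(f) = (1/n) sum_{i=1}^n ( f(X_i)^2 - E[f(X)^2] ),
  where the generic copy X is taken to be X_1 (all X_i have the same law).\<close>
definition Delta :: "'a measure \<Rightarrow> (nat \<Rightarrow> 'a \<Rightarrow> real) \<Rightarrow> nat \<Rightarrow> (real \<Rightarrow> real) \<Rightarrow> 'a \<Rightarrow> real" where
  "Delta M X n f \<omega> =
     (1 / real n) * (\<Sum>i\<in>{1..n}. (f (X i \<omega>))\<^sup>2 - (\<integral>\<omega>'. (f (X 1 \<omega>'))\<^sup>2 \<partial>M))"

definition mono_class :: "real \<Rightarrow> (real \<Rightarrow> real) set" where
  "mono_class C = {h. mono_on {0..1} h \<and> (\<forall>x\<in>{0..1}. \<bar>h x\<bar> \<le> C)}"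

end

theory Submission
  imports Defs
begin


lemma hoeff:
  fixes M :: "'a measure" and X :: "nat \<Rightarrow> 'a \<Rightarrow> real" and f :: "real \<Rightarrow> real"
  assumes P: "prob_space M"
    and Xm: "\<forall>i. X i \<in> borel_measurable M"
    and ind: "prob_space.indep_vars M (\<lambda>_. borel) X UNIV"
    and dis: "\<forall>i. distr M borel (X i) = \<mu>"
    and rng: "\<forall>i. \<forall>\<omega>\<in>space M. X i \<omega> \<in> {0..1}"
    and fm: "f \<in> borel_measurable borel"
    and fb: "\<forall>x\<in>{0..1}. f x \<in> {0..R}" and R: "R > 0" and n: "n \<ge> 1" and eta: "\<eta> \<ge> 0"
  shows "measure M {\<omega>\<in>space M. \<bar>(\<Sum>i\<in>{1..n}. f (X i \<omega>)) / real n - (\<integral>\<omega>'. f (X 1 \<omega>') \<partial>M)\<bar> \<ge> \<eta>}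
      \<le> 2 * exp (-2 * real n * \<eta>\<^sup>2 / R\<^sup>2)"
proof -
  interpret prob_space M by (rule P)
  have Xm': "\<And>i. X i \<in> borel_measurable M" using Xm by blast
  interpret H: Hoeffding_ineq_iid M "{1..n}" "\<lambda>i \<omega>. f (X i \<omega>)" "\<lambda>\<omega>. f (X 1 \<omega>)" 0 R "expectation (\<lambda>\<omega>. f (X 1 \<omega>))"
  proof unfold_locales
    show "finite {1..n}" by simp
    show "indep_vars (\<lambda>_. borel) (\<lambda>i \<omega>. f (X i \<omega>)) {1..n}"
      using indep_vars_compose2[of "\<lambda>_. borel" X "{1..n}" "\<lambda>_. f" "\<lambda>_. borel"]
        indep_vars_subset[OF ind] fm by auto
    fix i
    have "distr M borel (\<lambda>\<omega>. f (X i \<omega>)) = distr (distr M borel (X i)) borel f"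
      using distr_distr[of f borel borel "X i" M] fm Xm' by (simp add: comp_def)
    also have "\<dots> = distr (distr M borel (X 1)) borel f" using dis by simp
    also have "\<dots> = distr M borel (\<lambda>\<omega>. f (X 1 \<omega>))"
      using distr_distr[of f borel borel "X 1" M] fm Xm' by (simp add: comp_def)
    finally show "distr M borel (\<lambda>\<omega>. f (X i \<omega>)) = distr M borel (\<lambda>\<omega>. f (X 1 \<omega>))" .
  next
    show "random_variable borel (\<lambda>\<omega>. f (X 1 \<omega>))" using fm Xm' by measurable
    show "AE x in M. f (X 1 x) \<in> {0..R}" using rng fb by (intro AE_I2) auto
  qed
  have "prob {x\<in>space M. \<bar>(\<Sum>i\<in>{1..n}. f (X i x)) / real (card {1..n}) - expectation (\<lambda>\<omega>. f (X 1 \<omega>))\<bar> \<ge> \<eta>}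
       \<le> 2 * exp (-2 * real (card {1..n}) * \<eta>\<^sup>2 / (R - 0)\<^sup>2)"
    by (rule H.Hoeffding_ineq_abs_ge') (use eta R n in auto)
  then show ?thesis by simp
qed



lemma quantiles:
  fixes D :: "real measure" and m :: nat
  assumes P: "prob_space D" and S: "sets D = sets borel" and one: "measure D {0..1} = 1" and m: "m \<ge> 1"
  shows "\<exists>t::nat\<Rightarrow>real. t 0 = 0 \<and> (\<forall>j\<le>m. t j \<in> {0..1}) \<and> (\<forall>i j. i \<le> j \<longrightarrow> j \<le> m \<longrightarrow> t i \<le> t j)
     \<and> (\<forall>j\<in>{1..m}. measure D {t (j-1)<..<t j} \<le> 1 / real m) \<and> measure D {t m<..} = 0"
proof -
  interpret prob_space D by (rule P)
  have sp: "space D = UNIV" using sets_eq_imp_space_eq[OF S] by simp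
  have [simp]: "A \<in> sets D" if "A \<in> sets borel" for A using that S by simp
  have out0: "measure D (- {0..1}) = 0"
    using prob_compl[of "{0..1}"] one sp by (simp add: Compl_eq_Diff_UNIV)
  define Sj where "Sj j = {s\<in>{0..1}. measure D {..s} \<ge> real j / real m}" for j
  define t where "t j = (if j = 0 then 0 else Inf (Sj j))" for j
  have one_in: "1 \<in> Sj j" if "j \<le> m" for j
  proof -
    have "measure D {0..1} \<le> measure D {..(1::real)}" by (rule finite_measure_mono) auto
    moreover have "real j / real m \<le> 1" using that m by simp
    ultimately show ?thesis using one by (simp add: Sj_def)
  qed
  have bdd: "bdd_below (Sj j)" for j unfolding Sj_def by (rule bdd_belowI[of _ 0]) auto
  have tin: "t j \<in> {0..1}" if "j \<le> m" for j
  proof (cases "j = 0")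
    case False
    have "Inf (Sj j) \<le> 1" using cInf_lower[OF one_in[OF that] bdd] .
    moreover have "0 \<le> Inf (Sj j)" using one_in[OF that] by (intro cInf_greatest) (auto simp: Sj_def)
    ultimately show ?thesis using False by (simp add: t_def)
  qed (simp add: t_def)
  have mono: "t i \<le> t j" if "i \<le> j" "j \<le> m" for i j
  proof (cases "i = 0")
    case True then show ?thesis using tin[OF that(2)] by (simp add: t_def)
  next
    case False
    have ij: "real i / real m \<le> real j / real m" using that by (simp add: divide_right_mono)
    have "Sj j \<subseteq> Sj i"
    proof
      fix s assume "s \<in> Sj j"
      then have "s \<in> {0..1}" "real j / real m \<le> measure D {..s}" by (auto simp: Sj_def)
      then show "s \<in> Sj i" using ij by (simp add: Sj_def)
    qed
    then have "Inf (Sj i) \<le> Inf (Sj j)" using one_in[OF that(2)] bdd by (intro cInf_superset_mono) auto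
    then show ?thesis using False that by (simp add: t_def)
  qed
  have Q2: "measure D {..t j} \<ge> real j / real m" if j1: "1 \<le> j" and jm: "j \<le> m" for j
  proof -
    define A where "A k = {..t j + 1 / Suc k}" for k
    have inv: "1 / real (Suc k') \<le> 1 / real (Suc k)" if "k \<le> k'" for k k'
      using that by (intro divide_left_mono) auto
    have "decseq A" unfolding A_def decseq_def
    proof (intro allI impI subsetI)
      fix k k' x assume "k \<le> k'" "x \<in> {..t j + 1 / real (Suc k')}"
      then show "x \<in> {..t j + 1 / real (Suc k)}" using inv[of k k'] by simp
    qed
    moreover have "range A \<subseteq> sets D" unfolding A_def by auto
    ultimately have lim: "(\<lambda>k. measure D (A k)) \<longlonglongrightarrow> measure D (\<Inter>k. A k)"
      by (intro finite_Lim_measure_decseq)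
    have eqI: "(\<Inter>k. A k) = {..t j}"
    proof (intro set_eqI iffI)
      fix x assume "x \<in> (\<Inter>k. A k)"
      then have a: "x \<le> t j + 1 / real (Suc k)" for k by (simp add: A_def)
      show "x \<in> {..t j}"
      proof (rule ccontr)
        assume "x \<notin> {..t j}"
        then have "0 < x - t j" by simp
        from reals_Archimedean[OF this] obtain k where "inverse (real (Suc k)) < x - t j" ..
        then have "1 / real (Suc k) < x - t j" by (simp only: inverse_eq_divide)
        then show False using a[of k] by linarith
      qed
    next
      fix x assume x: "x \<in> {..t j}"
      have "x \<in> A k" for k
      proof -
        have "0 < 1 / real (Suc k)" by simp
        moreover have "x \<le> t j" using x by simp
        ultimately have "x \<le> t j + 1 / real (Suc k)" by linarith
        then show ?thesis unfolding A_def by simp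
      qed
      then show "x \<in> (\<Inter>k. A k)" by blast
    qed
    have lower: "real j / real m \<le> measure D (A k)" for k
    proof -
      have "Inf (Sj j) < t j + 1 / Suc k" using j1 by (simp add: t_def)
      then obtain s where s: "s \<in> Sj j" "s < t j + 1 / Suc k"
        using cInf_lessD[of "Sj j"] one_in[OF jm] by blast
      have "measure D {..s} \<le> measure D (A k)" unfolding A_def using s by (intro finite_measure_mono) auto
      with s show ?thesis by (simp add: Sj_def)
    qed
    have lim': "(\<lambda>k. measure D (A k)) \<longlonglongrightarrow> measure D {..t j}" using lim unfolding eqI .
    show ?thesis by (rule LIMSEQ_le_const[OF lim']) (use lower in blast)
  qed
  have Q1: "measure D {..<t j} \<le> real j / real m" if j1: "1 \<le> j" and jm: "j \<le> m" for j
  proof -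
    define A where "A k = {..t j - 1 / Suc k}" for k
    have inv: "1 / real (Suc k') \<le> 1 / real (Suc k)" if "k \<le> k'" for k k'
      using that by (intro divide_left_mono) auto
    have "incseq A" unfolding A_def incseq_def
    proof (intro allI impI subsetI)
      fix k k' x assume "k \<le> k'" "x \<in> {..t j - 1 / real (Suc k)}"
      then show "x \<in> {..t j - 1 / real (Suc k')}" using inv[of k k'] by simp
    qed
    moreover have "range A \<subseteq> sets D" unfolding A_def by auto
    ultimately have lim: "(\<lambda>k. measure D (A k)) \<longlonglongrightarrow> measure D (\<Union>k. A k)"
      by (intro finite_Lim_measure_incseq)
    have eqU: "(\<Union>k. A k) = {..<t j}"
    proof (intro set_eqI iffI)
      fix x assume "x \<in> {..<t j}"
      then have "0 < t j - x" by simp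
      from reals_Archimedean[OF this] obtain k where "inverse (real (Suc k)) < t j - x" ..
      then have "1 / real (Suc k) < t j - x" by (simp only: inverse_eq_divide)
      then have "x \<le> t j - 1 / real (Suc k)" by linarith
      then have "x \<in> A k" unfolding A_def by simp
      then show "x \<in> (\<Union>k. A k)" by blast
    next
      fix x assume "x \<in> (\<Union>k. A k)"
      then obtain k where "x \<in> A k" by blast
      then have "x \<le> t j - 1 / real (Suc k)" unfolding A_def by simp
      moreover have "0 < 1 / real (Suc k)" by simp
      ultimately have "x < t j" by linarith
      then show "x \<in> {..<t j}" by simp
    qed
    have upper: "measure D (A k) \<le> real j / real m" for k
    proof (cases "t j - 1 / Suc k < 0")
      case True
      have "measure D (A k) \<le> measure D (- {0..1})" unfolding A_def using True
        by (intro finite_measure_mono) auto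
      moreover have "0 \<le> real j / real m" by simp
      ultimately show ?thesis using out0 by linarith
    next
      case False
      have lt: "t j - 1 / Suc k < Inf (Sj j)" using j1 by (simp add: t_def)
      have "t j - 1 / Suc k \<notin> Sj j"
      proof
        assume "t j - 1 / Suc k \<in> Sj j"
        from cInf_lower[OF this bdd] lt show False by linarith
      qed
      moreover have "t j - 1 / Suc k \<le> 1"
      proof -
        have "t j \<le> 1" using tin[OF jm] by simp
        moreover have "0 < 1 / real (Suc k)" by simp
        ultimately show ?thesis by linarith
      qed
      ultimately show ?thesis using False by (simp add: Sj_def A_def)
    qed
    have lim': "(\<lambda>k. measure D (A k)) \<longlonglongrightarrow> measure D {..<t j}" using lim unfolding eqU .
    show ?thesis by (rule LIMSEQ_le_const2[OF lim']) (use upper in blast)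
  qed
  have cell: "measure D {t (j-1)<..<t j} \<le> 1 / real m" if "j \<in> {1..m}" for j
  proof (cases "t (j-1) = t j")
    case True then show ?thesis by simp
  next
    case False
    have "t (j-1) \<le> t j" using that by (intro mono) auto
    with False have le: "t (j-1) < t j" by simp
    have eqset: "{..<t j} = {..t (j-1)} \<union> {t (j-1)<..<t j}"
    proof (intro set_eqI iffI)
      fix x assume "x \<in> {..<t j}" then show "x \<in> {..t (j-1)} \<union> {t (j-1)<..<t j}" by auto
    next
      fix x assume "x \<in> {..t (j-1)} \<union> {t (j-1)<..<t j}" then show "x \<in> {..<t j}" using le by auto
    qed
    have dj: "{..t (j-1)} \<inter> {t (j-1)<..<t j} = {}" by auto
    have "measure D ({..t (j-1)} \<union> {t (j-1)<..<t j}) = measure D {..t (j-1)} + measure D {t (j-1)<..<t j}"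
      by (rule finite_measure_Union[OF _ _ dj]) simp_all
    then have "measure D {..<t j} = measure D {..t (j-1)} + measure D {t (j-1)<..<t j}"
      by (simp only: eqset)
    moreover have "measure D {..t (j-1)} \<ge> real (j-1) / real m"
    proof (cases "j = 1")
      case True then show ?thesis by simp
    next
      case False then show ?thesis using that by (intro Q2) auto
    qed
    moreover have "real (j-1) / real m = real j / real m - 1 / real m"
    proof -
      have "real (j-1) = real j - 1" using that by auto
      then show ?thesis by (simp add: diff_divide_distrib)
    qed
    moreover have "measure D {..<t j} \<le> real j / real m" using that by (intro Q1) auto
    ultimately show ?thesis by linarith
  qed
  have last: "measure D {t m<..} = 0"
  proof -
    have "{t m<..} = space D - {..t m}" using sp by auto
    then have "measure D {t m<..} = 1 - measure D {..t m}" using prob_compl by simp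
    moreover have "measure D {..t m} \<ge> 1" using Q2[of m] m by simp
    ultimately show ?thesis using measure_nonneg[of D "{t m<..}"] by linarith
  qed
  show ?thesis
  proof (intro exI[of _ t] conjI)
    show "t 0 = 0" by (simp add: t_def)
    show "\<forall>j\<le>m. t j \<in> {0..1}" using tin by blast
    show "\<forall>i j. i \<le> j \<longrightarrow> j \<le> m \<longrightarrow> t i \<le> t j" using mono by blast
    show "\<forall>j\<in>{1..m}. measure D {t (j-1)<..<t j} \<le> 1 / real m" using cell by blast
    show "measure D {t m<..} = 0" by (rule last)
  qed
qed



lemma numeric:
  fixes r R :: real and m n :: nat
  assumes r: "r \<ge> 1" and R: "R > 0" and m: "m \<ge> 1" and mr: "real m \<le> r^2" and rm: "r^2 < real m + 1"
    and n: "real n = r^16"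
  shows "real ((m+1)^(m+1)) * exp (-2 * real n * (1 / real m)\<^sup>2 / R\<^sup>2) \<le> exp (10 * R) * exp (- (r^4))"
proof -
  have m0: "real m > 0" using m by simp
  have "real ((m+1)^(m+1)) = real (m+1) ^ (m+1)" by (simp only: of_nat_power)
  also have "\<dots> = exp (ln (real (m+1) ^ (m+1)))" by (rule exp_ln[symmetric]) simp
  also have "ln (real (m+1) ^ (m+1)) = real (m+1) * ln (real (m+1))" by (rule ln_realpow)
  finally have "real ((m+1)^(m+1)) = exp (real (m+1) * ln (real (m+1)))" .
  also have "\<dots> \<le> exp (2 * r^4)"
  proof -
    note exp_le_cancel_iff[simp]
    have "ln (real (m+1)) \<le> real m" using ln_le_minus_one[of "real (m+1)"] by simp
    then have "real (m+1) * ln (real (m+1)) \<le> real (m+1) * real m" by (intro mult_left_mono) auto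
    also have "\<dots> \<le> 2 * (real m * real m)" using m by (simp add: algebra_simps)
    also have "real m * real m \<le> r^2 * r^2" using mr m0 by (intro mult_mono) auto
    finally show ?thesis by (simp add: power_add[symmetric])
  qed
  finally have A: "real ((m+1)^(m+1)) \<le> exp (2 * r^4)" .
  have B: "2 * r^12 / R\<^sup>2 \<le> 2 * real n * (1 / real m)\<^sup>2 / R\<^sup>2"
  proof -
    have mm: "(real m)^2 \<le> r^4"
    proof -
      have "(real m)^2 \<le> (r^2)^2" using mr m0 by (intro power_mono) auto
      then show ?thesis by (simp add: power_mult[symmetric])
    qed
    have "r^12 = r^16 / r^4" using r by (simp add: field_simps power_add[symmetric])
    also have "\<dots> \<le> r^16 / (real m)^2" using mm m0 r by (intro divide_left_mono) auto
    also have "\<dots> = real n * (1 / real m)\<^sup>2" using n by (simp add: power_divide)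
    finally show ?thesis using R by (intro divide_right_mono) auto
  qed
  have C: "3 * r^4 - 2 * r^12 / R\<^sup>2 \<le> 10 * R"
  proof (cases "r^4 \<le> 2 * R")
    case True
    have "0 \<le> 2 * r^12 / R\<^sup>2" by simp
    then show ?thesis using True R by linarith
  next
    case False
    then have "2 * R < r^4" by simp
    then have "(2*R)^2 < (r^4)^2" using R by (intro power_strict_mono) auto
    then have "4 * R^2 < r^8" by (simp add: power_mult_distrib power_mult[symmetric])
    then have "r^4 * (4 * R^2) \<le> r^4 * r^8" using r by (intro mult_left_mono) auto
    then have "4 * r^4 * R^2 \<le> r^4 * r^8" by (simp add: algebra_simps)
    then have "4 * r^4 \<le> r^12 / R^2" using R by (simp add: field_simps power_add[symmetric])
    moreover have "0 \<le> r^4" using r by simp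
    ultimately show ?thesis using R by linarith
  qed
  have "real ((m+1)^(m+1)) * exp (-2 * real n * (1 / real m)\<^sup>2 / R\<^sup>2)
      \<le> exp (2 * r^4) * exp (- (2 * r^12 / R\<^sup>2))"
    using A B by (intro mult_mono) auto
  also have "\<dots> = exp (2 * r^4 - 2 * r^12 / R\<^sup>2)" by (simp add: exp_diff exp_minus field_simps)
  also have "\<dots> \<le> exp (10 * R - r^4)" using C by simp
  also have "\<dots> = exp (10 * R) * exp (- (r^4))" by (simp add: exp_diff exp_minus field_simps)
  finally show ?thesis .
qed



lemma telescope:
  fixes a :: "nat \<Rightarrow> real"
  shows "k \<le> m \<Longrightarrow> (\<Sum>j\<in>{1..m}. (a j - a (j-1)) * (if j \<le> k then 1 else 0)) = a k - a 0"
proof (induction k)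
  case 0 then show ?case by simp
next
  case (Suc k)
  have "(\<Sum>j\<in>{1..m}. (a j - a (j-1)) * (if j \<le> Suc k then 1 else 0))
      = (\<Sum>j\<in>{1..m}. (a j - a (j-1)) * (if j \<le> k then 1 else 0)) + (a (Suc k) - a k)"
  proof -
    have "(\<Sum>j\<in>{1..m}. (a j - a (j-1)) * (if j \<le> Suc k then 1 else 0))
        = (\<Sum>j\<in>{1..m}. (a j - a (j-1)) * (if j \<le> k then 1 else 0) + (if j = Suc k then a j - a (j-1) else 0))"
      by (intro sum.cong) auto
    also have "\<dots> = (\<Sum>j\<in>{1..m}. (a j - a (j-1)) * (if j \<le> k then 1 else 0)) + (a (Suc k) - a k)"
      using Suc.prems by (simp add: sum.distrib)
    finally show ?thesis .
  qed
  then show ?case using Suc by simp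
qed

lemma telescope_full:
  fixes a :: "nat \<Rightarrow> real"
  shows "(\<Sum>j\<in>{1..m}. (a j - a (j-1))) = a m - a 0"
  using telescope[of m m a] by simp

context
  fixes C :: real and m :: nat and t :: "nat \<Rightarrow> real"
  assumes C: "C > 0" and m: "m \<ge> 1" and t0: "t 0 = 0" and tin: "\<forall>j\<le>m. t j \<in> {0..1}"
    and tmono: "\<forall>i j. i \<le> j \<longrightarrow> j \<le> m \<longrightarrow> t i \<le> t j"
begin

definition "dl = 2 * C / real m"

definition code :: "(real \<Rightarrow> real) \<Rightarrow> nat \<Rightarrow> nat" where
  "code h = restrict (\<lambda>j. nat \<lfloor>(h (t j) + C) / dl\<rfloor>) {0..m}"

definition Lf :: "(nat \<Rightarrow> nat) \<Rightarrow> real \<Rightarrow> real" where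
  "Lf a x = - C + dl * real (a 0) + dl * (\<Sum>j\<in>{1..m}. (real (a j) - real (a (j-1))) * indicator {t j..} x)"

definition Wf :: "(nat \<Rightarrow> nat) \<Rightarrow> real \<Rightarrow> real" where
  "Wf a x = dl + dl * (\<Sum>j\<in>{1..m}. (real (a j) - real (a (j-1))) * indicator {t (j-1)<..<t j} x)
     + 2 * C * indicator (- {0..t m}) x"

lemma dl_pos: "dl > 0" using C m by (simp add: dl_def)

lemma code_props:
  assumes h: "h \<in> mono_class C"
  shows "\<And>j. j \<le> m \<Longrightarrow> -C + dl * real (code h j) \<le> h (t j) \<and> h (t j) < -C + dl * (real (code h j) + 1)"
    and "\<And>j. j \<le> m \<Longrightarrow> code h j \<le> m"
    and "\<And>i j. i \<le> j \<Longrightarrow> j \<le> m \<Longrightarrow> code h i \<le> code h j"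
    and "code h \<in> {0..m} \<rightarrow>\<^sub>E {0..m}"
proof -
  have hm: "mono_on {0..1} h" and hb: "\<forall>x\<in>{0..1}. \<bar>h x\<bar> \<le> C" using h by (auto simp: mono_class_def)
  have v0: "0 \<le> (h (t j) + C) / dl" if "j \<le> m" for j
  proof -
    have "\<bar>h (t j)\<bar> \<le> C" using hb tin that by blast
    then have "0 \<le> h (t j) + C" by linarith
    then show ?thesis using dl_pos by simp
  qed
  have flo: "real (code h j) = of_int \<lfloor>(h (t j) + C) / dl\<rfloor>" if "j \<le> m" for j
    using v0[OF that] that by (simp add: code_def)
  show A: "-C + dl * real (code h j) \<le> h (t j) \<and> h (t j) < -C + dl * (real (code h j) + 1)" if "j \<le> m" for j
  proof -
    let ?v = "(h (t j) + C) / dl"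
    have e: "dl * ?v = h (t j) + C" using dl_pos by simp
    have "dl * of_int \<lfloor>?v\<rfloor> \<le> dl * ?v" using dl_pos by (intro mult_left_mono) (linarith, simp)
    moreover have "dl * ?v < dl * (of_int \<lfloor>?v\<rfloor> + 1)" using dl_pos by (intro mult_strict_left_mono) linarith+
    ultimately have "dl * of_int \<lfloor>?v\<rfloor> \<le> h (t j) + C" "h (t j) + C < dl * (of_int \<lfloor>?v\<rfloor> + 1)"
      using e by simp_all
    then show ?thesis using flo[OF that] by simp
  qed
  show B: "code h j \<le> m" if "j \<le> m" for j
  proof -
    have hC: "h (t j) \<le> C" using hb tin that by (meson abs_le_D1 atLeastAtMost_iff)
    have "(h (t j) + C) / dl \<le> (2 * C) / dl" using hC dl_pos by (intro divide_right_mono) auto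
    also have "(2 * C) / dl = real m" using C m by (simp add: dl_def)
    finally have "(h (t j) + C) / dl \<le> real m" .
    then have "\<lfloor>(h (t j) + C) / dl\<rfloor> \<le> \<lfloor>real m\<rfloor>" by (rule floor_mono)
    then have "\<lfloor>(h (t j) + C) / dl\<rfloor> \<le> int m" by simp
    then show ?thesis using that by (simp add: code_def)
  qed
  show "code h i \<le> code h j" if "i \<le> j" "j \<le> m" for i j
  proof -
    have "h (t i) \<le> h (t j)" using hm tin tmono that by (intro mono_onD[OF hm]) auto
    then have "(h (t i) + C) / dl \<le> (h (t j) + C) / dl" using dl_pos by (simp add: divide_right_mono)
    then show ?thesis using that by (simp add: code_def floor_mono nat_mono)
  qed
  show "code h \<in> {0..m} \<rightarrow>\<^sub>E {0..m}" using B by (auto simp: code_def)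
qed

lemma bracket:
  assumes h: "h \<in> mono_class C" and x: "x \<in> {0..1}"
  shows "Lf (code h) x \<le> h x \<and> h x \<le> Lf (code h) x + Wf (code h) x \<and> - C \<le> Lf (code h) x
     \<and> 0 \<le> Wf (code h) x \<and> Wf (code h) x \<le> 6 * C"
proof -
  define a where "a = code h"
  have hm: "mono_on {0..1} h" and hb: "\<forall>x\<in>{0..1}. \<bar>h x\<bar> \<le> C" using h by (auto simp: mono_class_def)
  note cp = code_props[OF h, folded a_def]
  have dnn: "0 \<le> real (a j) - real (a (j-1))" if "j \<in> {1..m}" for j using cp(3)[of "j-1" j] that by auto
  define K where "K = {j\<in>{0..m}. t j \<le> x}"
  have K0: "0 \<in> K" using t0 x by (auto simp: K_def)
  have Kf: "finite K" by (simp add: K_def)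
  define k where "k = Max K"
  have kK: "k \<in> K" using K0 Kf by (auto simp: k_def intro: Max_in)
  then have km: "k \<le> m" and tk: "t k \<le> x" by (auto simp: K_def)
  have iff: "t j \<le> x \<longleftrightarrow> j \<le> k" if "j \<le> m" for j
  proof
    assume "t j \<le> x" then have "j \<in> K" using that by (simp add: K_def)
    then show "j \<le> k" using Kf by (simp add: k_def)
  next
    assume "j \<le> k" then show "t j \<le> x" using tmono km tk by (meson order_trans)
  qed
  have "(\<Sum>j\<in>{1..m}. (real (a j) - real (a (j-1))) * indicator {t j..} x)
      = (\<Sum>j\<in>{1..m}. (real (a j) - real (a (j-1))) * (if j \<le> k then 1 else 0))"
    by (intro sum.cong) (auto simp: iff indicator_def)
  also have "\<dots> = real (a k) - real (a 0)" using telescope[OF km, of "\<lambda>j. real (a j)"] by simp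
  finally have S: "(\<Sum>j\<in>{1..m}. (real (a j) - real (a (j-1))) * indicator {t j..} x) = real (a k) - real (a 0)" .
  have L: "Lf a x = - C + dl * real (a k)" unfolding Lf_def S by (simp add: algebra_simps)
  have Lge: "- C \<le> Lf a x" using L dl_pos by simp
  have snn: "0 \<le> (\<Sum>j\<in>{1..m}. (real (a j) - real (a (j-1))) * indicator {t (j-1)<..<t j} x)"
    using dnn by (intro sum_nonneg) auto
  have Wge: "dl \<le> Wf a x" using snn dl_pos C by (simp add: Wf_def)
  have Wle: "Wf a x \<le> 6 * C"
  proof -
    have "(\<Sum>j\<in>{1..m}. (real (a j) - real (a (j-1))) * indicator {t (j-1)<..<t j} x)
        \<le> (\<Sum>j\<in>{1..m}. (real (a j) - real (a (j-1))))"
      using dnn by (intro sum_mono) (auto simp: indicator_def)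
    also have "\<dots> = real (a m) - real (a 0)" by (rule telescope_full)
    also have "\<dots> \<le> real m" using cp(2)[of m] by simp
    finally have s: "(\<Sum>j\<in>{1..m}. (real (a j) - real (a (j-1))) * indicator {t (j-1)<..<t j} x) \<le> real m" .
    have "dl * (\<Sum>j\<in>{1..m}. (real (a j) - real (a (j-1))) * indicator {t (j-1)<..<t j} x) \<le> dl * real m"
      using s dl_pos by (intro mult_left_mono) auto
    also have "\<dots> = 2 * C" using m by (simp add: dl_def)
    finally have "dl * (\<Sum>j\<in>{1..m}. (real (a j) - real (a (j-1))) * indicator {t (j-1)<..<t j} x) \<le> 2 * C" .
    moreover have "dl \<le> 2 * C" using m C by (simp add: dl_def field_simps)
    moreover have "2 * C * indicator (- {0..t m}) x \<le> 2 * C" using C by (simp add: indicator_def)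
    ultimately show ?thesis by (simp add: Wf_def)
  qed
  have hk: "-C + dl * real (a k) \<le> h (t k)" "h (t k) < -C + dl * (real (a k) + 1)" using cp(1)[OF km] by auto
  have lo: "Lf a x \<le> h x"
  proof -
    have "h (t k) \<le> h x" using tin km x tk by (intro mono_onD[OF hm]) auto
    then show ?thesis using L hk by simp
  qed
  have hi: "h x \<le> Lf a x + Wf a x"
  proof (cases "t k = x")
    case True then show ?thesis using L hk Wge by (simp add: algebra_simps)
  next
    case False
    with tk have lt: "t k < x" by simp
    show ?thesis
    proof (cases "k = m")
      case True
      then have "indicator (- {0..t m}) x = (1::real)" using lt by (simp add: indicator_def)
      then have "2 * C \<le> Wf a x" using snn dl_pos by (simp add: Wf_def)
      moreover have "h x \<le> C" using hb x by (meson abs_le_D1)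
      ultimately show ?thesis using Lge by simp
    next
      case False
      then have k1: "Suc k \<le> m" using km by simp
      have xlt: "x < t (Suc k)" using iff[OF k1] by simp
      have "h x \<le> h (t (Suc k))" using tin k1 x xlt by (intro mono_onD[OF hm]) auto
      also have "\<dots> < -C + dl * (real (a (Suc k)) + 1)" using cp(1)[OF k1] by simp
      finally have h1: "h x < -C + dl * (real (a (Suc k)) + 1)" .
      have "(real (a (Suc k)) - real (a (Suc k - 1))) * indicator {t (Suc k - 1)<..<t (Suc k)} x
          \<le> (\<Sum>j\<in>{1..m}. (real (a j) - real (a (j-1))) * indicator {t (j-1)<..<t j} x)"
        using dnn k1 by (intro member_le_sum) auto
      then have "real (a (Suc k)) - real (a k) \<le> (\<Sum>j\<in>{1..m}. (real (a j) - real (a (j-1))) * indicator {t (j-1)<..<t j} x)"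
        using lt xlt by (simp add: indicator_def)
      then have "dl * (real (a (Suc k)) - real (a k)) \<le> dl * (\<Sum>j\<in>{1..m}. (real (a j) - real (a (j-1))) * indicator {t (j-1)<..<t j} x)"
        using dl_pos by (intro mult_left_mono) auto
      then have "dl + dl * (real (a (Suc k)) - real (a k)) \<le> Wf a x"
        using C by (simp add: Wf_def indicator_def)
      then show ?thesis using h1 L by (simp add: algebra_simps)
    qed
  qed
  show ?thesis using lo hi Lge Wge dl_pos Wle unfolding a_def by simp
qed

lemma Lf_meas[measurable]: "Lf a \<in> borel_measurable borel"
  unfolding Lf_def by measurable

lemma Wf_meas[measurable]: "Wf a \<in> borel_measurable borel"
  unfolding Wf_def by measurable

lemma Wf_integral:
  fixes D :: "real measure"
  assumes P: "prob_space D" and S: "sets D = sets borel" and one: "measure D {0..1} = 1"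
    and cell: "\<forall>j\<in>{1..m}. measure D {t (j-1)<..<t j} \<le> 1 / real m"
    and last: "measure D {t m<..} = 0" and h: "h \<in> mono_class C"
  shows "integrable D (Wf (code h))" "integral\<^sup>L D (Wf (code h)) \<le> 4 * C / real m"
proof -
  interpret prob_space D by (rule P)
  have sp: "space D = UNIV" using sets_eq_imp_space_eq[OF S] by simp
  have [simp]: "A \<in> sets D" if "A \<in> sets borel" for A using that S by simp
  define a where "a = code h"
  note cp = code_props[OF h, folded a_def]
  have dnn: "0 \<le> real (a j) - real (a (j-1))" if "j \<in> {1..m}" for j using cp(3)[of "j-1" j] that by auto
  have ii: "integrable D (indicator A :: real \<Rightarrow> real)" if "A \<in> sets borel" for A
    using that by (intro integrable_real_indicator) (auto simp: emeasure_eq_measure)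
  have out0: "measure D (- {0..1}) = 0"
    using prob_compl[of "{0..1}"] one sp by (simp add: Compl_eq_Diff_UNIV)
  have o2: "measure D (- {0..t m}) = 0"
  proof -
    have "- {0..t m} \<subseteq> - {0..1} \<union> {t m<..}" by auto
    then have "measure D (- {0..t m}) \<le> measure D (- {0..1} \<union> {t m<..})" by (intro finite_measure_mono) auto
    also have "\<dots> \<le> measure D (- {0..1}) + measure D {t m<..}" by (intro measure_Un_le) auto
    finally show ?thesis using out0 last measure_nonneg[of D "- {0..t m}"] by linarith
  qed
  define SS where "SS x = (\<Sum>j\<in>{1..m}. (real (a j) - real (a (j-1))) * indicator {t (j-1)<..<t j} x)" for x
  have int_sum: "integrable D SS" unfolding SS_def
    by (rule Bochner_Integration.integrable_sum, rule integrable_mult_right, rule ii) auto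
  have iSS: "integral\<^sup>L D SS = (\<Sum>j\<in>{1..m}. (real (a j) - real (a (j-1))) * measure D {t (j-1)<..<t j})"
  proof -
    have "integral\<^sup>L D SS = (\<Sum>j\<in>{1..m}. integral\<^sup>L D (\<lambda>x. (real (a j) - real (a (j-1))) * indicator {t (j-1)<..<t j} x))"
      unfolding SS_def by (rule Bochner_Integration.integral_sum, rule integrable_mult_right, rule ii) auto
    also have "\<dots> = (\<Sum>j\<in>{1..m}. (real (a j) - real (a (j-1))) * measure D {t (j-1)<..<t j})"
    proof (intro sum.cong refl)
      fix j
      have "integral\<^sup>L D (indicator {t (j-1)<..<t j} :: real \<Rightarrow> real) = measure D {t (j-1)<..<t j}"
        using sp by simp
      then show "integral\<^sup>L D (\<lambda>x. (real (a j) - real (a (j-1))) * indicator {t (j-1)<..<t j} x)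
          = (real (a j) - real (a (j-1))) * measure D {t (j-1)<..<t j}"
        by (simp only: integral_mult_right_zero)
    qed
    finally show ?thesis .
  qed
  have iI: "integral\<^sup>L D (indicator (- {0..t m}) :: real \<Rightarrow> real) = measure D (- {0..t m})"
    using sp by simp
  have WS: "Wf a = (\<lambda>x. (dl + dl * SS x) + 2 * C * indicator (- {0..t m}) x)"
    by (simp add: Wf_def SS_def fun_eq_iff)
  have i1: "integrable D (\<lambda>x. dl + dl * SS x)" using int_sum by (intro Bochner_Integration.integrable_add) auto
  have i2: "integrable D (\<lambda>x. 2 * C * indicator (- {0..t m}) x :: real)"
    by (rule integrable_mult_right, rule ii) auto
  have "integral\<^sup>L D (Wf a) = integral\<^sup>L D (\<lambda>x. dl + dl * SS x) + integral\<^sup>L D (\<lambda>x. 2 * C * indicator (- {0..t m}) x)"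
    unfolding WS by (rule Bochner_Integration.integral_add[OF i1 i2])
  also have "integral\<^sup>L D (\<lambda>x. dl + dl * SS x) = integral\<^sup>L D (\<lambda>x. dl) + integral\<^sup>L D (\<lambda>x. dl * SS x)"
    by (rule Bochner_Integration.integral_add) (use int_sum in auto)
  finally have eq: "integral\<^sup>L D (Wf a) = dl + dl * (\<Sum>j\<in>{1..m}. (real (a j) - real (a (j-1))) * measure D {t (j-1)<..<t j})
      + 2 * C * measure D (- {0..t m})"
    by (simp only: integral_mult_right_zero iSS iI) (simp add: prob_space)
  show "integrable D (Wf (code h))" unfolding a_def[symmetric] WS
    using i1 i2 by (rule Bochner_Integration.integrable_add)
  have "(\<Sum>j\<in>{1..m}. (real (a j) - real (a (j-1))) * measure D {t (j-1)<..<t j})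
      \<le> (\<Sum>j\<in>{1..m}. (real (a j) - real (a (j-1))) * (1 / real m))"
    using dnn cell by (intro sum_mono mult_left_mono) auto
  also have "\<dots> = (real (a m) - real (a 0)) / real m"
    using telescope_full[where m=m and a="\<lambda>j. real (a j)"] by (simp add: sum_divide_distrib[symmetric])
  also have "\<dots> \<le> 1" using cp(2)[of m] m by (simp add: field_simps)
  finally have "dl * (\<Sum>j\<in>{1..m}. (real (a j) - real (a (j-1))) * measure D {t (j-1)<..<t j}) \<le> dl"
    using dl_pos by (simp add: mult_left_le)
  then have "integral\<^sup>L D (Wf a) \<le> 2 * dl" using eq o2 by simp
  then show "integral\<^sup>L D (Wf (code h)) \<le> 4 * C / real m" by (simp add: a_def dl_def)
qed

end


lemma pointwise_diff:
  fixes g h l w C :: real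
  assumes "\<bar>g\<bar> \<le> C" "\<bar>h\<bar> \<le> C" "-C \<le> l" "l \<le> h" "h \<le> l + w"
  shows "\<bar>(g - h)\<^sup>2 - (g - l)\<^sup>2\<bar> \<le> 4 * C * w"
proof -
  have "(g - h)\<^sup>2 - (g - l)\<^sup>2 = (l - h) * (2 * g - h - l)" by (simp add: power2_eq_square algebra_simps)
  then have "\<bar>(g - h)\<^sup>2 - (g - l)\<^sup>2\<bar> = \<bar>l - h\<bar> * \<bar>2 * g - h - l\<bar>" by (simp add: abs_mult)
  also have "\<dots> \<le> w * (4 * C)" using assms by (intro mult_mono) auto
  finally show ?thesis by (simp add: algebra_simps)
qed



lemma sub_main:
  fixes C :: real
  assumes C: "C > 0"
  defines "R \<equiv> 4 * C^2 + 6 * C"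
  defines "Bc \<equiv> 1 + 4 * C + 32 * C^2"
  defines "T \<equiv> 10 * R + 16 * Bc^4"
  assumes P: "prob_space M"
    and Xm: "\<forall>i. X i \<in> borel_measurable M"
    and ind: "prob_space.indep_vars M (\<lambda>_. borel) X UNIV"
    and dis: "\<forall>i. distr M borel (X i) = \<mu>"
    and rng: "\<forall>i. \<forall>\<omega>\<in>space M. X i \<omega> \<in> {0..1}"
    and gm: "g \<in> borel_measurable (restrict_space borel {0..1})"
    and gb: "\<forall>x\<in>{0..1}. \<bar>g x\<bar> \<le> C"
    and n1: "n \<ge> 1"
  shows "\<exists>A\<in>sets M.
         {\<omega>\<in>space M. (SUP h\<in>mono_class C. \<bar>Delta M X n (\<lambda>x. g x - h x) \<omega>\<bar>) > real n powr (- (1/16))} \<subseteq> A \<and>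
         measure M A \<le> 4 * exp T * exp (- 1 * real n powr (1/4))"
proof -
  interpret prob_space M by (rule P)
  have Xm'[measurable]: "X i \<in> borel_measurable M" for i using Xm by blast
  have C2: "0 < C^2" using C by simp
  have R0: "R > 0" using C C2 unfolding R_def by linarith
  have Bc0: "Bc > 0" using C C2 unfolding Bc_def by linarith
  define r where "r = real n powr (1/16)"
  have pw: "r ^ k = real n powr (real k / 16)" for k :: nat
  proof -
    have "r ^ k = r powr real k" using n1 by (simp add: r_def powr_realpow)
    also have "\<dots> = real n powr (real k / 16)" by (simp add: r_def powr_powr)
    finally show ?thesis .
  qed
  have r16: "real n = r^16" using pw[of 16] n1 by simp
  have r4: "real n powr (1/4) = r^4" using pw[of 4] by simp
  have rinv: "real n powr (- (1/16)) = 1 / r" by (simp add: r_def powr_minus_divide)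
  have r1: "r \<ge> 1" using n1 by (simp add: r_def ge_one_powr_ge_zero)
  have goalR: "4 * exp T * exp (- 1 * real n powr (1/4)) = 4 * exp (T - r^4)"
    by (simp add: r4 exp_diff exp_minus field_simps)
  show ?thesis
  proof (cases "r < 2 * Bc")
    case True
    have "r^4 < (2 * Bc)^4" using True r1 by (intro power_strict_mono) auto
    then have "r^4 < T" using R0 by (simp add: T_def power_mult_distrib)
    then have "1 \<le> exp (T - r^4)" by simp
    then have e: "1 \<le> 4 * exp (T - r^4)" by linarith
    have "measure M (space M) \<le> 4 * exp T * exp (- 1 * real n powr (1/4))"
      unfolding goalR by (simp only: prob_space) (rule e)
    then show ?thesis by (intro bexI[of _ "space M"]) auto
  next
    case False
    then have rB: "2 * Bc \<le> r" by simp
    define m where "m = nat \<lfloor>r^2\<rfloor>"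
    have r2: "1 \<le> r^2" using r1 by simp
    have mr: "real m \<le> r^2" using r2 by (simp add: m_def)
    have rm: "r^2 < real m + 1" using r2 by (simp add: m_def)
    have "(1::int) \<le> \<lfloor>r^2\<rfloor>" using r2 by (simp add: le_floor_iff)
    then have "nat 1 \<le> nat \<lfloor>r^2\<rfloor>" by (rule nat_mono)
    then have m1: "m \<ge> 1" unfolding m_def by simp
    have m0: "real m > 0" using m1 by simp
    define D where "D = distr M borel (X 1)"
    have PD: "prob_space D" unfolding D_def by (rule prob_space_distr) simp
    have SD: "sets D = sets borel" by (simp add: D_def)
    have oneD: "measure D {0..1} = 1"
    proof -
      have "measure D {0..1} = measure M (X 1 -` {0..1} \<inter> space M)" unfolding D_def
        by (rule measure_distr) auto
      also have "X 1 -` {0..1} \<inter> space M = space M" using rng by auto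
      finally show ?thesis using prob_space by simp
    qed
    obtain t where t0: "t 0 = 0" and tin: "\<forall>j\<le>m. t j \<in> {0..1}"
      and tmono: "\<forall>i j. i \<le> j \<longrightarrow> j \<le> m \<longrightarrow> t i \<le> t j"
      and cell: "\<forall>j\<in>{1..m}. measure D {t (j-1)<..<t j} \<le> 1 / real m" and last: "measure D {t m<..} = 0"
      using quantiles[OF PD SD oneD m1] by blast
    note br = bracket[OF C m1 t0 tin tmono]
    note cps = code_props[OF C m1 t0 tin tmono]
    note Lm[measurable] = Lf_meas[OF C m1 t0 tin tmono]
    note Wm[measurable] = Wf_meas[OF C m1 t0 tin tmono]
    note Wint = Wf_integral[OF C m1 t0 tin tmono PD SD oneD cell last]
    define gc where "gc x = g (max 0 (min 1 x))" for x
    have clamp: "(\<lambda>x::real. max 0 (min 1 x)) \<in> borel \<rightarrow>\<^sub>M restrict_space borel {0..1}"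
      by (intro measurable_restrict_space2) auto
    have gcm[measurable]: "gc \<in> borel_measurable borel"
      using measurable_comp[OF clamp gm] unfolding gc_def[abs_def] by (simp add: comp_def)
    have gcx: "gc x = g x" if "x \<in> {0..1}" for x using that by (simp add: gc_def)
    have gcb: "\<bar>gc x\<bar> \<le> C" if "x \<in> {0..1}" for x using that gb gcx by simp
    define \<eta> where "\<eta> = 1 / real m"
    define QL where "QL a x = (gc x - Lf C m t a x)\<^sup>2" for a x
    have QLm[measurable]: "QL a \<in> borel_measurable borel" for a unfolding QL_def by measurable
    define Fam where "Fam = code C m t ` mono_class C"
    define Bad where "Bad f = {\<omega>\<in>space M. \<bar>(\<Sum>i\<in>{1..n}. f (X i \<omega>)) / real n - (\<integral>\<omega>'. f (X 1 \<omega>') \<partial>M)\<bar> \<ge> \<eta>}" for f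
    have Badm: "Bad f \<in> sets M" if [measurable]: "f \<in> borel_measurable borel" for f
      unfolding Bad_def by measurable
    define A where "A = (\<Union>a\<in>Fam. Bad (QL a) \<union> Bad (Wf C m t a))"
    have FamPi: "Fam \<subseteq> {0..m} \<rightarrow>\<^sub>E {0..m}" using cps(4) by (auto simp: Fam_def)
    have Famfin: "finite Fam" using finite_subset[OF FamPi] by (auto intro: finite_PiE)
    have Famcard: "card Fam \<le> (m+1)^(m+1)"
    proof -
      have "card Fam \<le> card ({0..m} \<rightarrow>\<^sub>E {0..m::nat})" using FamPi by (intro card_mono) (auto intro: finite_PiE)
      also have "\<dots> = (m+1)^(m+1)" by (simp add: card_PiE)
      finally show ?thesis .
    qed
    have Asets: "A \<in> sets M" unfolding A_def using Famfin Badm by auto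
    have hoeffB: "measure M (Bad f) \<le> 2 * exp (-2 * real n * \<eta>\<^sup>2 / R\<^sup>2)"
      if "f \<in> borel_measurable borel" "\<forall>x\<in>{0..1}. f x \<in> {0..R}" for f
      unfolding Bad_def using hoeff[OF P Xm ind dis rng that R0 n1, of \<eta>] by (simp add: \<eta>_def)
    have QLb: "\<forall>x\<in>{0..1}. QL a x \<in> {0..R}" if "a \<in> Fam" for a
    proof
      fix x :: real assume x: "x \<in> {0..1}"
      from that obtain h where h: "h \<in> mono_class C" and a: "a = code C m t h" by (auto simp: Fam_def)
      have hb: "\<bar>h x\<bar> \<le> C" using h x by (auto simp: mono_class_def)
      have "\<bar>gc x - Lf C m t a x\<bar> \<le> 2 * C" using br[OF h x] gcb[OF x] hb unfolding a by linarith
      then have "\<bar>gc x - Lf C m t a x\<bar> \<le> \<bar>2 * C\<bar>" using C by simp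
      then have "(gc x - Lf C m t a x)\<^sup>2 \<le> (2 * C)\<^sup>2" by (simp only: abs_le_square_iff)
      then show "QL a x \<in> {0..R}" using C by (simp add: QL_def R_def power_mult_distrib)
    qed
    have Wb: "\<forall>x\<in>{0..1}. Wf C m t a x \<in> {0..R}" if "a \<in> Fam" for a
    proof
      fix x :: real assume x: "x \<in> {0..1}"
      from that obtain h where h: "h \<in> mono_class C" and a: "a = code C m t h" by (auto simp: Fam_def)
      have "6 * C \<le> R" using C by (simp add: R_def)
      then show "Wf C m t a x \<in> {0..R}" using br[OF h x] unfolding a by auto
    qed
    define E where "E = exp (-2 * real n * \<eta>\<^sup>2 / R\<^sup>2)"
    have measA: "measure M A \<le> 4 * exp T * exp (- 1 * real n powr (1/4))"
    proof -
      have "measure M A \<le> (\<Sum>a\<in>Fam. measure M (Bad (QL a) \<union> Bad (Wf C m t a)))"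
        unfolding A_def using Famfin Badm by (intro measure_UNION_le) auto
      also have "\<dots> \<le> (\<Sum>a\<in>Fam. 4 * E)"
      proof (intro sum_mono)
        fix a assume a: "a \<in> Fam"
        have "measure M (Bad (QL a) \<union> Bad (Wf C m t a)) \<le> measure M (Bad (QL a)) + measure M (Bad (Wf C m t a))"
          using Badm by (intro measure_Un_le) auto
        also have "\<dots> \<le> 2 * E + 2 * E" unfolding E_def
          using hoeffB[OF QLm QLb[OF a]] hoeffB[OF Wm Wb[OF a]] by (intro add_mono)
        finally show "measure M (Bad (QL a) \<union> Bad (Wf C m t a)) \<le> 4 * E" by simp
      qed
      also have "\<dots> = 4 * real (card Fam) * E" by simp
      also have "\<dots> \<le> 4 * real ((m+1)^(m+1)) * E"
      proof -
        have "real (card Fam) \<le> real ((m+1)^(m+1))" using Famcard by (simp only: of_nat_le_iff)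
        moreover have "0 \<le> E" by (simp add: E_def)
        ultimately show ?thesis by (intro mult_right_mono) auto
      qed
      also have "\<dots> \<le> 4 * (exp (10 * R) * exp (- (r^4)))"
      proof -
        have "real ((m+1)^(m+1)) * E \<le> exp (10 * R) * exp (- (r^4))"
          using numeric[OF r1 R0 m1 mr rm r16] unfolding E_def \<eta>_def .
        then show ?thesis by linarith
      qed
      also have "\<dots> \<le> 4 * exp (T - r^4)"
      proof -
        have "exp (10 * R) * exp (- (r^4)) = exp (10 * R - r^4)" by (simp add: exp_diff exp_minus field_simps)
        also have "\<dots> \<le> exp (T - r^4)" by (simp add: T_def)
        finally show ?thesis by simp
      qed
      finally show ?thesis unfolding goalR .
    qed
    have key: "\<bar>Delta M X n (\<lambda>x. g x - h x) \<omega>\<bar> \<le> 1 / r"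
      if h: "h \<in> mono_class C" and \<omega>: "\<omega> \<in> space M" "\<omega> \<notin> A" for h \<omega>
    proof -
      define a where "a = code C m t h"
      have aF: "a \<in> Fam" using h by (simp add: Fam_def a_def)
      define W where "W = Wf C m t a"
      define Q where "Q = QL a"
      have Wm'[measurable]: "W \<in> borel_measurable borel" unfolding W_def by (rule Wm)
      have Qm'[measurable]: "Q \<in> borel_measurable borel" unfolding Q_def by (rule QLm)
      have nb1: "\<omega> \<notin> Bad Q" and nb2: "\<omega> \<notin> Bad W" using \<omega> aF by (auto simp: A_def Q_def W_def)
      define En where "En f = (\<Sum>i\<in>{1..n}. f (X i \<omega>)) / real n" for f :: "real \<Rightarrow> real"
      define Ex where "Ex f = (\<integral>\<omega>'. f (X 1 \<omega>') \<partial>M)" for f :: "real \<Rightarrow> real"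
      have d1: "\<bar>En Q - Ex Q\<bar> < \<eta>" using nb1 \<omega>(1) unfolding Bad_def En_def Ex_def by (simp add: not_le)
      have d2: "\<bar>En W - Ex W\<bar> < \<eta>" using nb2 \<omega>(1) unfolding Bad_def En_def Ex_def by (simp add: not_le)
      have hm: "mono_on {0..1} h" and hb: "\<forall>x\<in>{0..1}. \<bar>h x\<bar> \<le> C" using h by (auto simp: mono_class_def)
      define hc where "hc x = h (max 0 (min 1 x))" for x
      have hcmono: "mono hc"
      proof (rule monoI)
        fix x y :: real assume "x \<le> y"
        then show "hc x \<le> hc y" unfolding hc_def by (intro mono_onD[OF hm]) auto
      qed
      have hcm[measurable]: "hc \<in> borel_measurable borel" by (rule borel_measurable_mono[OF hcmono])
      define Qc where "Qc x = (gc x - hc x)\<^sup>2" for x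
      have Qcm[measurable]: "Qc \<in> borel_measurable borel" unfolding Qc_def by measurable
      have Xin: "X i \<omega>' \<in> {0..1}" if "\<omega>' \<in> space M" for i \<omega>' using rng that by blast
      have hcx: "hc x = h x" if "x \<in> {0..1}" for x using that by (simp add: hc_def)
      have Qcx: "Qc x = (g x - h x)\<^sup>2" if "x \<in> {0..1}" for x using that gcx hcx by (simp add: Qc_def)
      have pwb: "\<bar>Qc x - Q x\<bar> \<le> 4 * C * W x" if x: "x \<in> {0..1}" for x
      proof -
        have hx: "\<bar>h x\<bar> \<le> C" using hb x by blast
        have "\<bar>(gc x - h x)\<^sup>2 - (gc x - Lf C m t a x)\<^sup>2\<bar> \<le> 4 * C * W x"
          using br[OF h x] gcb[OF x] hx unfolding a_def[symmetric] W_def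
          by (intro pointwise_diff) auto
        then show ?thesis using hcx[OF x] by (simp add: Qc_def Q_def QL_def)
      qed
      have Wx: "0 \<le> W x" "W x \<le> R" if x: "x \<in> {0..1}" for x using Wb[OF aF] x by (auto simp: W_def)
      have Qx: "0 \<le> Q x" "Q x \<le> R" if x: "x \<in> {0..1}" for x using QLb[OF aF] x by (auto simp: Q_def)
      have intb: "integrable M (\<lambda>\<omega>'. f (X 1 \<omega>'))"
        if fm: "f \<in> borel_measurable borel" and fb: "\<forall>x\<in>{0..1}. \<bar>f x\<bar> \<le> K" for f :: "real \<Rightarrow> real" and K :: real
      proof (rule integrable_const_bound[where B=K])
        show "AE x in M. norm (f (X 1 x)) \<le> K" using fb Xin by (intro AE_I2) auto
        show "(\<lambda>\<omega>'. f (X 1 \<omega>')) \<in> borel_measurable M" using fm by measurable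
      qed
      have iQ: "integrable M (\<lambda>\<omega>'. Q (X 1 \<omega>'))" using Qx by (intro intb[of _ R]) auto
      have iW: "integrable M (\<lambda>\<omega>'. W (X 1 \<omega>'))" using Wx by (intro intb[of _ R]) auto
      have iQc: "integrable M (\<lambda>\<omega>'. Qc (X 1 \<omega>'))"
      proof (rule intb[of _ "R + 4 * C * R"])
        show "\<forall>x\<in>{0..1}. \<bar>Qc x\<bar> \<le> R + 4 * C * R"
        proof
          fix x :: real assume x: "x \<in> {0..1}"
          have "4 * C * W x \<le> 4 * C * R" using Wx[OF x] C by (intro mult_left_mono) auto
          then show "\<bar>Qc x\<bar> \<le> R + 4 * C * R" using pwb[OF x] Qx[OF x] by (simp add: abs_le_iff)
        qed
      qed (rule Qcm)
      have DeltaEq: "Delta M X n (\<lambda>x. g x - h x) \<omega> = En Qc - Ex Qc"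
      proof -
        have ie: "(\<integral>\<omega>'. (g (X 1 \<omega>') - h (X 1 \<omega>'))\<^sup>2 \<partial>M) = Ex Qc"
          unfolding Ex_def
        proof (rule Bochner_Integration.integral_cong)
          fix x assume "x \<in> space M"
          from Qcx[OF Xin[OF this, of 1]] show "(g (X 1 x) - h (X 1 x))\<^sup>2 = Qc (X 1 x)" by simp
        qed simp
        have se: "(\<Sum>i\<in>{1..n}. (g (X i \<omega>) - h (X i \<omega>))\<^sup>2) = (\<Sum>i\<in>{1..n}. Qc (X i \<omega>))"
          by (intro sum.cong refl) (simp add: Qcx[OF Xin[OF \<omega>(1)]])
        have "Delta M X n (\<lambda>x. g x - h x) \<omega>
            = (1 / real n) * ((\<Sum>i\<in>{1..n}. (g (X i \<omega>) - h (X i \<omega>))\<^sup>2) - real n * Ex Qc)"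
          unfolding Delta_def ie by (simp add: sum_subtractf)
        also have "\<dots> = En Qc - Ex Qc" unfolding se En_def using n1 by (simp add: field_simps)
        finally show ?thesis .
      qed
      have enb: "\<bar>En Qc - En Q\<bar> \<le> 4 * C * En W"
      proof -
        have s1: "\<bar>\<Sum>i\<in>{1..n}. Qc (X i \<omega>) - Q (X i \<omega>)\<bar> \<le> 4 * C * (\<Sum>i\<in>{1..n}. W (X i \<omega>))"
        proof -
          have "\<bar>\<Sum>i\<in>{1..n}. Qc (X i \<omega>) - Q (X i \<omega>)\<bar> \<le> (\<Sum>i\<in>{1..n}. \<bar>Qc (X i \<omega>) - Q (X i \<omega>)\<bar>)"
            by (rule sum_abs)
          also have "\<dots> \<le> (\<Sum>i\<in>{1..n}. 4 * C * W (X i \<omega>))"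
            by (intro sum_mono pwb Xin \<omega>(1))
          also have "\<dots> = 4 * C * (\<Sum>i\<in>{1..n}. W (X i \<omega>))" by (simp add: sum_distrib_left)
          finally show ?thesis .
        qed
        have "\<bar>\<Sum>i\<in>{1..n}. Qc (X i \<omega>) - Q (X i \<omega>)\<bar> / real n \<le> 4 * C * (\<Sum>i\<in>{1..n}. W (X i \<omega>)) / real n"
          using s1 by (intro divide_right_mono) auto
        moreover have "En Qc - En Q = (\<Sum>i\<in>{1..n}. Qc (X i \<omega>) - Q (X i \<omega>)) / real n"
          by (simp add: En_def sum_subtractf diff_divide_distrib)
        ultimately show ?thesis by (simp add: En_def)
      qed
      have exb1: "Ex Qc - Ex Q \<le> 4 * C * Ex W"
      proof -
        have "Ex Qc - Ex Q = (\<integral>\<omega>'. Qc (X 1 \<omega>') - Q (X 1 \<omega>') \<partial>M)"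
          unfolding Ex_def by (rule Bochner_Integration.integral_diff[OF iQc iQ, symmetric])
        also have "\<dots> \<le> (\<integral>\<omega>'. 4 * C * W (X 1 \<omega>') \<partial>M)"
          using iQc iQ iW pwb Xin by (intro integral_mono) (auto simp: abs_le_iff)
        also have "\<dots> = 4 * C * Ex W" unfolding Ex_def by simp
        finally show ?thesis .
      qed
      have exb2: "Ex Q - Ex Qc \<le> 4 * C * Ex W"
      proof -
        have "Ex Q - Ex Qc = (\<integral>\<omega>'. Q (X 1 \<omega>') - Qc (X 1 \<omega>') \<partial>M)"
          unfolding Ex_def by (rule Bochner_Integration.integral_diff[OF iQ iQc, symmetric])
        also have "\<dots> \<le> (\<integral>\<omega>'. 4 * C * W (X 1 \<omega>') \<partial>M)"
          using iQc iQ iW pwb Xin by (intro integral_mono) (auto simp: abs_le_iff)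
        also have "\<dots> = 4 * C * Ex W" unfolding Ex_def by simp
        finally show ?thesis .
      qed
      have ExW: "Ex W \<le> 4 * C / real m"
      proof -
        have "Ex W = integral\<^sup>L D W" unfolding Ex_def D_def by (rule integral_distr[symmetric]) auto
        also have "\<dots> \<le> 4 * C / real m" unfolding W_def a_def by (rule Wint(2)[OF h])
        finally show ?thesis .
      qed
      have p1: "4 * C * En W \<le> 4 * C * Ex W + 4 * C * \<eta>"
      proof -
        have "4 * C * En W \<le> 4 * C * (Ex W + \<eta>)" using d2 C by (intro mult_left_mono) (auto simp: abs_less_iff)
        then show ?thesis by (simp add: algebra_simps)
      qed
      have p2: "4 * C * Ex W \<le> 16 * C^2 / real m"
      proof -
        have "4 * C * Ex W \<le> 4 * C * (4 * C / real m)" using ExW C by (intro mult_left_mono) auto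
        then show ?thesis by (simp add: power2_eq_square)
      qed
      have eqB: "\<eta> + 4 * C * \<eta> + 2 * (16 * C^2 / real m) = Bc / real m"
        using m0 by (simp add: \<eta>_def Bc_def field_simps power2_eq_square)
      have "\<bar>En Qc - Ex Qc\<bar> \<le> Bc / real m"
        using d1 enb exb1 exb2 p1 p2 eqB unfolding abs_le_iff abs_less_iff by linarith
      also have "Bc / real m \<le> 1 / r"
      proof -
        have "Bc * r \<le> (r / 2) * r" using rB r1 by (intro mult_right_mono) auto
        also have "\<dots> = r^2 / 2" by (simp add: power2_eq_square)
        also have "\<dots> \<le> real m" using rm m1 by simp
        finally have "Bc * r \<le> real m" .
        then show ?thesis using m0 r1 by (simp add: field_simps)
      qed
      finally show ?thesis unfolding DeltaEq .
    qed
    have incl: "{\<omega>\<in>space M. (SUP h\<in>mono_class C. \<bar>Delta M X n (\<lambda>x. g x - h x) \<omega>\<bar>) > real n powr (- (1/16))} \<subseteq> A"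
    proof
      fix \<omega> assume "\<omega> \<in> {\<omega>\<in>space M. (SUP h\<in>mono_class C. \<bar>Delta M X n (\<lambda>x. g x - h x) \<omega>\<bar>) > real n powr (- (1/16))}"
      then have \<omega>: "\<omega> \<in> space M" and gt: "(SUP h\<in>mono_class C. \<bar>Delta M X n (\<lambda>x. g x - h x) \<omega>\<bar>) > 1 / r"
        by (auto simp: rinv)
      show "\<omega> \<in> A"
      proof (rule ccontr)
        assume "\<omega> \<notin> A"
        have ne: "mono_class C \<noteq> {}"
        proof -
          have "(\<lambda>_. 0) \<in> mono_class C" using C by (auto simp: mono_class_def mono_on_def)
          then show ?thesis by blast
        qed
        have "(SUP h\<in>mono_class C. \<bar>Delta M X n (\<lambda>x. g x - h x) \<omega>\<bar>) \<le> 1 / r"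
          using key[OF _ \<omega> \<open>\<omega> \<notin> A\<close>] ne by (intro cSUP_least) auto
        with gt show False by simp
      qed
    qed
    show ?thesis using incl measA Asets by blast
  qed
qed

theorem lemma2:
  fixes C :: real
  assumes "C > 0"
  shows "\<exists>\<alpha> \<beta> c1 c2 :: real. \<alpha> > 0 \<and> \<beta> > 0 \<and> c1 > 0 \<and> c2 > 0 \<and>
    (\<forall>(M :: 'a measure) (X :: nat \<Rightarrow> 'a \<Rightarrow> real) (\<mu> :: real measure) (g :: real \<Rightarrow> real) (n :: nat).
      prob_space M \<and>
      (\<forall>i. X i \<in> borel_measurable M) \<and>
      prob_space.indep_vars M (\<lambda>_. borel) X UNIV \<and>
      (\<forall>i. distr M borel (X i) = \<mu>) \<and>
      (\<forall>i. \<forall>\<omega>\<in>space M. X i \<omega> \<in> {0..1}) \<and>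
      g \<in> borel_measurable (restrict_space borel {0..1}) \<and>
      (\<forall>x\<in>{0..1}. \<bar>g x\<bar> \<le> C) \<and>
      n \<ge> 1
      \<longrightarrow>
      (\<exists>A\<in>sets M.
         {\<omega>\<in>space M. (SUP h\<in>mono_class C. \<bar>Delta M X n (\<lambda>x. g x - h x) \<omega>\<bar>) > real n powr (-\<alpha>)} \<subseteq> A \<and>
         measure M A \<le> c1 * exp (- c2 * real n powr \<beta>)))"
proof -
  let ?T = "10 * (4 * C^2 + 6 * C) + 16 * (1 + 4 * C + 32 * C^2)^4"
  show ?thesis
    apply (rule exI[of _ "1/16"], rule exI[of _ "1/4"], rule exI[of _ "4 * exp ?T"], rule exI[of _ "1::real"])
    apply (intro conjI)
        apply simp
       apply simp
      apply simp
     apply simp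
    apply (intro allI impI, elim conjE)
    apply (rule sub_main[OF assms])
           apply assumption+
    done
qed

end
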